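(* Let $\lambda_0,\omega\in\mathbb{C}$ with $\omega\neq0$, let $\lambda_j=\lambda_0+j\omega$ for $j=0,\dots,n$, and let $a\ne b$ be real with $e^{\omega(b-a)}\neq1$. For $k=0,\dots,n$ define $$p_{n,k}(x):=\frac{e^{\lambda_0(x-a)}}{k!\,\omega^k}\big(e^{\omega(x-a)}-1\big)^k\left(\frac{1-e^{\omega(x-b)}}{1-e^{\omega(a-b)}}\right)^{n-k}.$$ Then each $p_{n,k}$ belongs to $E_{(\lambda_0,\dots,\lambda_n)}$, has a zero of order exactly $k$ at $a$ and a zero of order exactly $n-k$ at $b$, and satisfies $k!\lim_{x\to a}p_{n,k}(x)/(x-a)^k=1$; i.e. $p_{n,k}$, $k=0,\dots,n$, is the Bernstein basis of $E_{(\lambda_0,\dots,\lambda_n)}$ with respect to $a,b$.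
   Context: $E_{(\lambda_0,\dots,\lambda_n)}$ denotes the space of all $f\in C^\infty(\mathbb{R},\mathbb{C})$ with $(\frac{d}{dx}-\lambda_0)\cdots(\frac{d}{dx}-\lambda_n)f=0$. A zero of order (exactly) $k$ at $a$ means $f(a)=\dots=f^{(k-1)}(a)=0$, $f^{(k)}(a)\neq0$. The Bernstein basis with respect to $a\ne b$ is the unique family $p_{n,k}\in E_{(\lambda_0,\dots,\lambda_n)}$, $k=0,\dots,n$, with a zero of order exactly $k$ at $a$, exactly $n-k$ at $b$, and $p_{n,k}^{(k)}(a)=1$. *)

theory Defs
  imports "HOL-Analysis.Analysis"
begin

fun higher_deriv :: "nat \<Rightarrow> (real \<Rightarrow> complex) \<Rightarrow> real \<Rightarrow> complex" where
  "higher_deriv 0 f = f"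
| "higher_deriv (Suc j) f = (\<lambda>x. vector_derivative (higher_deriv j f) (at x))"

definition smooth :: "(real \<Rightarrow> complex) \<Rightarrow> bool" where
  "smooth f \<longleftrightarrow> (\<forall>j x. higher_deriv j f differentiable (at x))"

definition diff_shift :: "complex \<Rightarrow> (real \<Rightarrow> complex) \<Rightarrow> real \<Rightarrow> complex" where
  "diff_shift \<mu> f = (\<lambda>x. vector_derivative f (at x) - \<mu> * f x)"

fun diff_op :: "(nat \<Rightarrow> complex) \<Rightarrow> nat \<Rightarrow> (real \<Rightarrow> complex) \<Rightarrow> real \<Rightarrow> complex" where
  "diff_op lam 0 f = diff_shift (lam 0) f"
| "diff_op lam (Suc n) f = diff_op lam n (diff_shift (lam (Suc n)) f)"

definition E_space :: "(nat \<Rightarrow> complex) \<Rightarrow> nat \<Rightarrow> (real \<Rightarrow> complex) set" where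
  "E_space lam n = {f. smooth f \<and> diff_op lam n f = (\<lambda>_. 0)}"

definition zero_of_order :: "(real \<Rightarrow> complex) \<Rightarrow> real \<Rightarrow> nat \<Rightarrow> bool" where
  "zero_of_order f a k \<longleftrightarrow> (\<forall>j<k. higher_deriv j f a = 0) \<and> higher_deriv k f a \<noteq> 0"

text \<open>p is a Bernstein basis of E_(lam 0..lam n) with respect to a, b (the defining
  properties; uniqueness of such a family is part of the paper's definition, not of the claim).\<close>
definition is_bernstein_basis ::
  "(nat \<Rightarrow> complex) \<Rightarrow> nat \<Rightarrow> real \<Rightarrow> real \<Rightarrow> (nat \<Rightarrow> real \<Rightarrow> complex) \<Rightarrow> bool" where
  "is_bernstein_basis lam n a b p \<longleftrightarrow>
     (\<forall>k\<le>n. p k \<in> E_space lam n \<and> zero_of_order (p k) a k \<and> zero_of_order (p k) b (n - k)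
            \<and> higher_deriv k (p k) a = 1)"

end

theory Submission
  imports Defs "HOL-Computational_Algebra.Polynomial"
begin

inductive_set ES :: "(real \<Rightarrow> complex) set" where
  ES_exp: "(\<lambda>x. c * exp (\<mu> * of_real x)) \<in> ES"
| ES_add: "f \<in> ES \<Longrightarrow> g \<in> ES \<Longrightarrow> (\<lambda>x. f x + g x) \<in> ES"
| ES_mult: "f \<in> ES \<Longrightarrow> g \<in> ES \<Longrightarrow> (\<lambda>x. f x * g x) \<in> ES"

lemma vd_exp: fixes \<mu> :: complex shows "((\<lambda>x. exp (\<mu> * of_real x)) has_vector_derivative (\<mu> * exp (\<mu> * of_real x))) (at x)"
proof -
  have "((\<lambda>z. exp (\<mu> * z)) has_field_derivative (exp (\<mu> * of_real x) * \<mu>)) (at (of_real x))"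
    by (auto intro!: derivative_eq_intros)
  from has_vector_derivative_real_field[OF this] show ?thesis by (simp add: mult.commute)
qed

lemma vd_exp_shift: fixes \<mu> :: complex shows "((\<lambda>x. exp (\<mu> * of_real (x - a))) has_vector_derivative (\<mu> * exp (\<mu> * of_real (x - a)))) (at x)"
proof -
  have "((\<lambda>z. exp (\<mu> * (z - of_real a))) has_field_derivative (exp (\<mu> * (of_real x - of_real a)) * \<mu>)) (at (of_real x))"
    by (auto intro!: derivative_eq_intros)
  from has_vector_derivative_real_field[OF this] show ?thesis by (simp add: mult.commute)
qed

lemma ES_deriv: "f \<in> ES \<Longrightarrow> \<exists>g\<in>ES. \<forall>x. (f has_vector_derivative g x) (at x)"
proof (induction rule: ES.induct)
  case (ES_exp c \<mu>)
  show ?case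
    apply (rule bexI[of _ "\<lambda>x. (c*\<mu>) * exp (\<mu> * of_real x)"])
    using has_vector_derivative_mult_right[OF vd_exp, of c \<mu>] ES.ES_exp[of "c*\<mu>" \<mu>] by (auto simp: mult.assoc)
next
  case (ES_add f g)
  then obtain f' g' where "f' \<in> ES" "g' \<in> ES" "\<And>x. (f has_vector_derivative f' x) (at x)"
    "\<And>x. (g has_vector_derivative g' x) (at x)" by blast
  then show ?case by (intro bexI[of _ "\<lambda>x. f' x + g' x"]) (auto intro: has_vector_derivative_add ES.ES_add)
next
  case (ES_mult f g)
  then obtain f' g' where "f' \<in> ES" "g' \<in> ES" "\<And>x. (f has_vector_derivative f' x) (at x)"
    "\<And>x. (g has_vector_derivative g' x) (at x)" by blast
  then show ?case by (intro bexI[of _ "\<lambda>x. f x * g' x + f' x * g x"]) 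
     (use ES_mult.hyps in \<open>auto intro!: has_vector_derivative_mult ES.ES_add ES.ES_mult\<close>)
qed

lemma ES_D: assumes "f \<in> ES"
  shows "(\<lambda>x. vector_derivative f (at x)) \<in> ES" "\<And>x. (f has_vector_derivative vector_derivative f (at x)) (at x)"
proof -
  obtain g where g: "g \<in> ES" "\<And>x. (f has_vector_derivative g x) (at x)" using ES_deriv[OF assms] by blast
  then have "(\<lambda>x. vector_derivative f (at x)) = g" using vector_derivative_at by blast
  then show "(\<lambda>x. vector_derivative f (at x)) \<in> ES" using g by simp
  show "\<And>x. (f has_vector_derivative vector_derivative f (at x)) (at x)"
    using g vector_derivative_works differentiableI_vector by blast
qed

lemma ES_const: "(\<lambda>x. c) \<in> ES"
  using ES_exp[of c 0] by simp

lemma ES_cmult: "f \<in> ES \<Longrightarrow> (\<lambda>x. c * f x) \<in> ES"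
  using ES_mult[OF ES_const] by blast

lemma ES_diff: "f \<in> ES \<Longrightarrow> g \<in> ES \<Longrightarrow> (\<lambda>x. f x - g x) \<in> ES"
  using ES_add[of f "\<lambda>x. (-1) * g x"] ES_cmult[of g "-1"] by simp

lemma ES_divc: "f \<in> ES \<Longrightarrow> (\<lambda>x. f x / c) \<in> ES"
  using ES_cmult[of f "inverse c"] by (simp add: divide_inverse mult.commute)

lemma ES_pow: "f \<in> ES \<Longrightarrow> (\<lambda>x. f x ^ k) \<in> ES"
  by (induction k) (auto intro: ES_const ES_mult)

lemma ES_exp_shift: "(\<lambda>x. exp (\<mu> * of_real (x - a))) \<in> ES"
proof -
  have "(\<lambda>x. exp (\<mu> * of_real (x - a))) = (\<lambda>x. exp (- \<mu> * of_real a) * exp (\<mu> * of_real x))"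
    by (rule ext) (simp add: exp_add[symmetric] algebra_simps)
  then show ?thesis using ES_exp by metis
qed

lemma hd_ES: "f \<in> ES \<Longrightarrow> higher_deriv j f \<in> ES"
  by (induction j) (auto intro: ES_D)

lemma smooth_ES: "f \<in> ES \<Longrightarrow> smooth f"
  unfolding smooth_def using hd_ES ES_D(2) differentiableI_vector by blast

lemma hd_Suc': "higher_deriv (Suc j) f = higher_deriv j (\<lambda>x. vector_derivative f (at x))"
  by (induction j) auto

lemma vd_pow: "(u has_vector_derivative u') (at x) \<Longrightarrow>
  ((\<lambda>x. u x ^ Suc k) has_vector_derivative (of_nat (Suc k) * u x ^ k * u')) (at x)"
  for u :: "real \<Rightarrow> complex"
proof (induction k)
  case 0 then show ?case by simp
next
  case (Suc k)
  have c1: "((\<lambda>x. u x * u x ^ Suc k) has_vector_derivative (u x * (of_nat (Suc k) * u x ^ k * u') + u' * u x ^ Suc k)) (at x)"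
    by (rule has_vector_derivative_mult[OF Suc.prems Suc.IH[OF Suc.prems]])
  have eq: "(\<lambda>x. u x ^ Suc (Suc k)) = (\<lambda>x. u x * u x ^ Suc k)" by simp
  show ?case unfolding eq
    by (rule has_vector_derivative_eq_rhs[OF c1]) (simp add: algebra_simps)
qed

lemma Z: assumes "g \<in> ES" "u \<in> ES" "u a = 0"
  shows "(\<forall>j<k. higher_deriv j (\<lambda>x. g x * u x ^ k) a = 0) \<and>
     higher_deriv k (\<lambda>x. g x * u x ^ k) a = of_nat (fact k) * g a * (vector_derivative u (at a))^k"
  using assms(1)
proof (induction k arbitrary: g)
  case 0 then show ?case by simp
next
  case (Suc k)
  define u' where "u' = (\<lambda>x. vector_derivative u (at x))"
  define g' where "g' = (\<lambda>x. vector_derivative g (at x))"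
  define g1 where "g1 = (\<lambda>x. g' x * u x + of_nat (Suc k) * g x * u' x)"
  have g1: "g1 \<in> ES" unfolding g1_def g'_def u'_def
    using Suc.prems assms(2) by (intro ES_add ES_mult ES_const ES_D) auto
  have eq: "(\<lambda>x. vector_derivative (\<lambda>x. g x * u x ^ Suc k) (at x)) = (\<lambda>x. g1 x * u x ^ k)"
  proof
    fix x
    have "((\<lambda>x. g x * u x ^ Suc k) has_vector_derivative
       (g x * (of_nat (Suc k) * u x ^ k * u' x) + g' x * u x ^ Suc k)) (at x)"
      unfolding u'_def g'_def
      by (intro has_vector_derivative_mult vd_pow ES_D(2) Suc.prems assms(2))
    then show "vector_derivative (\<lambda>x. g x * u x ^ Suc k) (at x) = g1 x * u x ^ k"
      unfolding g1_def by (simp add: vector_derivative_at algebra_simps)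
  qed
  note IH = Suc.IH[OF g1]
  have "\<forall>j<Suc k. higher_deriv j (\<lambda>x. g x * u x ^ Suc k) a = 0"
  proof (intro allI impI)
    fix j assume "j < Suc k"
    show "higher_deriv j (\<lambda>x. g x * u x ^ Suc k) a = 0"
    proof (cases j)
      case 0 then show ?thesis using assms(3) by simp
    next
      case (Suc i)
      then have "higher_deriv j (\<lambda>x. g x * u x ^ Suc k) a = higher_deriv i (\<lambda>x. g1 x * u x ^ k) a"
        by (simp only: hd_Suc' eq)
      then show ?thesis using IH Suc \<open>j < Suc k\<close> by simp
    qed
  qed
  moreover have "higher_deriv (Suc k) (\<lambda>x. g x * u x ^ Suc k) a = of_nat (fact (Suc k)) * g a * (u' a)^Suc k"
    using IH assms(3) by (simp only: hd_Suc' eq) (simp add: g1_def u'_def algebra_simps)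
  ultimately show ?case unfolding u'_def by blast
qed


lemma diff_shift_expsum: fixes mu :: "nat \<Rightarrow> complex" shows
  "diff_shift \<nu> (\<lambda>x. \<Sum>j\<le>N. c j * exp (mu j * of_real x)) = (\<lambda>x. \<Sum>j\<le>N. (c j * (mu j - \<nu>)) * exp (mu j * of_real x))"
proof
  fix x
  have "((\<lambda>x. \<Sum>j\<le>N. c j * exp (mu j * of_real x)) has_vector_derivative (\<Sum>j\<le>N. c j * (mu j * exp (mu j * of_real x)))) (at x)"
    by (intro has_vector_derivative_sum has_vector_derivative_mult_right vd_exp)
  then show "diff_shift \<nu> (\<lambda>x. \<Sum>j\<le>N. c j * exp (mu j * of_real x)) x = (\<Sum>j\<le>N. (c j * (mu j - \<nu>)) * exp (mu j * of_real x))"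
    unfolding diff_shift_def by (simp add: vector_derivative_at sum_distrib_left sum_subtractf[symmetric] algebra_simps)
qed

lemma diff_op_expsum: fixes mu :: "nat \<Rightarrow> complex" shows
  "diff_op lam m (\<lambda>x. \<Sum>j\<le>N. c j * exp (mu j * of_real x)) = (\<lambda>x. \<Sum>j\<le>N. (c j * (\<Prod>i\<le>m. (mu j - lam i))) * exp (mu j * of_real x))"
proof (induction m arbitrary: c)
  case 0 then show ?case by (simp add: diff_shift_expsum)
next
  case (Suc m)
  show ?case by (simp only: diff_op.simps diff_shift_expsum Suc.IH) (simp add: algebra_simps)
qed

lemma lim_exp: fixes w :: complex shows "((\<lambda>x. (exp (w * of_real (x - a)) - 1) / of_real (x - a)) \<longlongrightarrow> w) (at a)"
proof -
  have "((\<lambda>z. exp (w*z)) has_field_derivative w) (at 0)" by (auto intro!: derivative_eq_intros)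
  then have L: "((\<lambda>z. (exp(w*z) - 1)/z) \<longlongrightarrow> w) (at 0)" using has_field_derivativeD by force
  have F: "filterlim (\<lambda>x. complex_of_real (x - a)) (at 0) (at a)"
    unfolding filterlim_at by (auto simp: eventually_at_filter intro!: tendsto_eq_intros)
  from filterlim_compose[OF L F] show ?thesis by (simp add: o_def)
qed


lemma poly_sum_le: fixes q :: "complex poly" shows "degree q \<le> n \<Longrightarrow> poly q z = (\<Sum>i\<le>n. coeff q i * z ^ i)"
  unfolding poly_altdef
  by (rule sum.mono_neutral_left) (auto simp: coeff_eq_0)

theorem mainTheorem12:
  fixes l0 w :: complex and a b :: real and n :: nat
    and lam :: "nat \<Rightarrow> complex" and p :: "nat \<Rightarrow> real \<Rightarrow> complex"
  assumes "w \<noteq> 0"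
    and "\<And>j. j \<le> n \<Longrightarrow> lam j = l0 + of_nat j * w"
    and "a \<noteq> b"
    and "exp (w * of_real (b - a)) \<noteq> 1"
    and "\<And>k x. p k x =
          exp (l0 * of_real (x - a)) / (of_nat (fact k) * w ^ k)
          * (exp (w * of_real (x - a)) - 1) ^ k
          * ((1 - exp (w * of_real (x - b))) / (1 - exp (w * of_real (a - b)))) ^ (n - k)"
  shows "(\<forall>k\<le>n. p k \<in> E_space lam n
              \<and> zero_of_order (p k) a k
              \<and> zero_of_order (p k) b (n - k)
              \<and> ((\<lambda>x. of_nat (fact k) * (p k x / (of_real (x - a)) ^ k)) \<longlongrightarrow> 1) (at a))
         \<and> is_bernstein_basis lam n a b p"
proof -
  define E where "E = exp (w * of_real (a - b))"
  define D where "D = 1 - E"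
  have "E \<noteq> 1"
  proof
    assume "E = 1"
    then have "exp (- (w * of_real (a - b))) = 1" unfolding E_def by (simp add: exp_minus)
    moreover have "- (w * of_real (a - b)) = w * of_real (b - a)" by (simp add: algebra_simps)
    ultimately show False using assms(4) by simp
  qed
  then have D: "D \<noteq> 0" unfolding D_def by simp
  define B where "B = (\<lambda>x. (1 - exp (w * of_real (x - b))) / D)"
  define U where "U = (\<lambda>x. exp (w * of_real (x - a)) - 1)"
  define C where "C = (\<lambda>k::nat. of_nat (fact k) * w ^ k)"
  have C0: "C k \<noteq> 0" for k unfolding C_def using assms(1) by simp
  have pk: "p k = (\<lambda>x. exp (l0 * of_real (x - a)) / C k * U x ^ k * B x ^ (n - k))" for k
    by (rule ext) (simp add: assms(5) B_def U_def C_def D_def E_def)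
  have B_ES: "B \<in> ES" unfolding B_def
    by (intro ES_divc ES_diff ES_const ES_exp_shift)
  have U_ES: "U \<in> ES" unfolding U_def
    by (intro ES_diff ES_const ES_exp_shift)
  have pES: "p k \<in> ES" for k unfolding pk
    by (intro ES_mult ES_pow ES_divc ES_exp_shift B_ES U_ES)
  have Ba: "B a = 1" unfolding B_def D_def E_def using D unfolding D_def E_def by simp
  have Ub: "U b \<noteq> 0" unfolding U_def using assms(4) by simp
  have dU: "vector_derivative U (at a) = w"
  proof -
    have "(U has_vector_derivative (w * exp (w * of_real (a - a)) - 0)) (at a)"
      unfolding U_def by (intro has_vector_derivative_diff vd_exp_shift has_vector_derivative_const)
    then show ?thesis by (simp add: vector_derivative_at)
  qed
  have dB: "vector_derivative B (at b) = - w / D"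
  proof -
    have "(B has_vector_derivative ((0 - w * exp (w * of_real (b - b))) / D)) (at b)"
      unfolding B_def by (intro has_vector_derivative_divide has_vector_derivative_diff vd_exp_shift has_vector_derivative_const)
    then show ?thesis by (simp add: vector_derivative_at)
  qed
  have main: "p k \<in> E_space lam n \<and> zero_of_order (p k) a k \<and> zero_of_order (p k) b (n - k)
      \<and> ((\<lambda>x. of_nat (fact k) * (p k x / (of_real (x - a)) ^ k)) \<longlongrightarrow> 1) (at a)
      \<and> higher_deriv k (p k) a = 1" if kn: "k \<le> n" for k
  proof -
    define g where "g = (\<lambda>x. exp (l0 * of_real (x - a)) / C k * B x ^ (n - k))"
    have gES: "g \<in> ES" unfolding g_def by (intro ES_mult ES_pow ES_divc ES_exp_shift B_ES)
    have pg: "p k = (\<lambda>x. g x * U x ^ k)" unfolding pk g_def by (rule ext) (simp add: ac_simps)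
    have Ua: "U a = 0" unfolding U_def by simp
    from Z[OF gES U_ES Ua, of k] have Za:
      "(\<forall>j<k. higher_deriv j (p k) a = 0) \<and> higher_deriv k (p k) a = 1"
      unfolding pg[symmetric] dU using C0[of k] by (simp add: g_def Ba C_def)
    define g2 where "g2 = (\<lambda>x. exp (l0 * of_real (x - a)) / C k * U x ^ k)"
    have g2ES: "g2 \<in> ES" unfolding g2_def by (intro ES_mult ES_pow ES_divc ES_exp_shift U_ES)
    have pg2: "p k = (\<lambda>x. g2 x * B x ^ (n - k))" unfolding pk g2_def by (rule ext) (simp add: ac_simps)
    have Bb: "B b = 0" unfolding B_def by simp
    from Z[OF g2ES B_ES Bb, of "n - k"] have Zb:
      "(\<forall>j<n-k. higher_deriv j (p k) b = 0) \<and> higher_deriv (n-k) (p k) b \<noteq> 0"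
      unfolding pg2[symmetric] dB using C0[of k] D assms(1) Ub by (simp add: g2_def)
    define Q where "Q = smult (1 / C k) ([:-1, 1:] ^ k * [:1 / D, - E / D:] ^ (n - k))"
    have degQ: "degree Q \<le> n"
    proof -
      have "degree Q \<le> degree ([:-1, 1:] ^ k * [:1 / D, - E / D:] ^ (n - k))"
        unfolding Q_def by (rule degree_smult_le)
      also have "\<dots> \<le> degree ([:-1, 1:] ^ k :: complex poly) + degree ([:1 / D, - E / D:] ^ (n - k))"
        by (rule degree_mult_le)
      also have "\<dots> \<le> degree [:-1, 1::complex:] * k + degree [:1 / D, - E / D:] * (n - k)"
        by (intro add_mono degree_power_le)
      also have "\<dots> \<le> 1 * k + 1 * (n - k)"
        by (intro add_mono mult_right_mono) auto
      finally show ?thesis using kn by simp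
    qed
    define c where "c = (\<lambda>i. coeff Q i * exp (- (lam i * of_real a)))"
    have rep: "p k = (\<lambda>x. \<Sum>i\<le>n. c i * exp (lam i * of_real x))"
    proof
      fix x
      define z where "z = exp (w * of_real (x - a))"
      have Bx: "B x = poly [:1 / D, - E / D:] z"
      proof -
        have "w * of_real (x - b) = w * of_real (a - b) + w * of_real (x - a)" by (simp add: algebra_simps)
        then have "exp (w * of_real (x - b)) = E * z" unfolding E_def z_def by (simp add: exp_add)
        then show ?thesis unfolding B_def using D by (simp add: field_simps)
      qed
      have "p k x = exp (l0 * of_real (x - a)) * poly Q z"
        unfolding pk Q_def Bx by (simp add: U_def z_def poly_power algebra_simps)
      also have "\<dots> = (\<Sum>i\<le>n. coeff Q i * (exp (l0 * of_real (x - a)) * z ^ i))"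
        by (simp add: poly_sum_le[OF degQ] sum_distrib_left algebra_simps)
      also have "\<dots> = (\<Sum>i\<le>n. c i * exp (lam i * of_real x))"
      proof (rule sum.cong[OF refl])
        fix i assume "i \<in> {..n}"
        then have li: "lam i = l0 + of_nat i * w" using assms(2) by simp
        have "exp (l0 * of_real (x - a)) * z ^ i = exp (l0 * of_real (x - a) + of_nat i * (w * of_real (x - a)))"
          unfolding z_def by (simp add: exp_add exp_of_nat_mult)
        also have "l0 * of_real (x - a) + of_nat i * (w * of_real (x - a)) = - (lam i * of_real a) + lam i * of_real x"
          unfolding li by (simp add: algebra_simps)
        finally have e: "exp (l0 * of_real (x - a)) * z ^ i = exp (- (lam i * of_real a) + lam i * of_real x)" .
        show "coeff Q i * (exp (l0 * of_real (x - a)) * z ^ i) = c i * exp (lam i * of_real x)"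
          unfolding c_def e exp_add by simp
      qed
      finally show "p k x = (\<Sum>i\<le>n. c i * exp (lam i * of_real x))" .
    qed
    have "diff_op lam n (p k) = (\<lambda>_. 0)"
      unfolding rep diff_op_expsum
      by (rule ext, rule sum.neutral) auto
    then have Esp: "p k \<in> E_space lam n" unfolding E_space_def using smooth_ES[OF pES] by simp
    have T: "((\<lambda>x. exp (l0 * of_real (x - a)) * B x ^ (n - k) * ((exp (w * of_real (x - a)) - 1) / of_real (x - a)) ^ k / w ^ k)
        \<longlongrightarrow> exp (l0 * of_real (a - a)) * B a ^ (n - k) * w ^ k / w ^ k) (at a)"
      unfolding B_def using D assms(1) by (intro tendsto_intros lim_exp) auto
    have ev: "eventually (\<lambda>x. exp (l0 * of_real (x - a)) * B x ^ (n - k) * ((exp (w * of_real (x - a)) - 1) / of_real (x - a)) ^ k / w ^ k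
        = of_nat (fact k) * (p k x / (of_real (x - a)) ^ k)) (at a)"
    proof -
      have "eventually (\<lambda>x. x \<noteq> a) (at a)" by (simp add: eventually_at_filter)
      then show ?thesis
      proof (rule eventually_mono)
        fix x assume "x \<noteq> a"
        then have "complex_of_real (x - a) \<noteq> 0" by simp
        then show "exp (l0 * of_real (x - a)) * B x ^ (n - k) * ((exp (w * of_real (x - a)) - 1) / of_real (x - a)) ^ k / w ^ k
          = of_nat (fact k) * (p k x / (of_real (x - a)) ^ k)"
          unfolding pk U_def C_def using assms(1) by (simp add: field_simps power_divide)
      qed
    qed
    have Lim: "((\<lambda>x. of_nat (fact k) * (p k x / (of_real (x - a)) ^ k)) \<longlongrightarrow> 1) (at a)"
      using tendsto_cong[OF ev] T Ba assms(1) by simp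
    show ?thesis using Za Zb Esp Lim unfolding zero_of_order_def by auto
  qed
  show ?thesis using main unfolding is_bernstein_basis_def by blast
qed

end
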